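(* If $R \subseteq \mathbb{R}$ contains an infinite strictly increasing sequence, then there exists a function $f : \mathbb{N}^{\mathbb{N}} \to R$ such that Player I has a winning strategy in $\Gamma(f)$, and for each $r \in \mathbb{R}$ and each Cantor set $C \subseteq \mathbb{N}^{\mathbb{N}}$ the set $C \cap \{f \ge r\}$ is either uncountable or empty.
   Context: Here $X = \mathbb{N}^{\mathbb{N}}$ (the branches of the full tree of finite sequences of natural numbers) with the product topology. A Cantor set is a subset homeomorphic to the middle-thirds Cantor set. $\{f \ge r\} = \{x : f(x) \ge r\}$. The game $\Gamma(f)$: Player I and Player II alternate, Player I moving first; Player I plays natural numbers $x_0, x_1, \dots$, and after each move $x_t$ Player II plays a real number $v_t$. Player II wins the run iff $f(x_0,x_1,\dots) = \limsup_{t\to\infty} v_t$; otherwise Player I wins. *)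

theory Defs
  imports "HOL-Analysis.Analysis" "HOL-Library.Liminf_Limsup"
begin

text \<open>Baire space X = nat => nat carries the product topology (instance from
Function_Topology, nat with its discrete metric topology).\<close>

primrec cantor_stage :: "nat \<Rightarrow> real set" where
  "cantor_stage 0 = {0..1}"
| "cantor_stage (Suc n) = (\<lambda>x. x / 3) ` cantor_stage n \<union> (\<lambda>x. 2/3 + x / 3) ` cantor_stage n"

definition middle_thirds_cantor :: "real set" where
  "middle_thirds_cantor = (\<Inter>n. cantor_stage n)"

definition is_cantor_set :: "(nat \<Rightarrow> nat) set \<Rightarrow> bool" where
  "is_cantor_set C \<longleftrightarrow> C homeomorphic middle_thirds_cantor"

text \<open>A strategy for Player I maps the history (own previous
moves x_0..x_(t-1), Player II's previous moves v_0..v_(t-1)) to the next move x_t.\<close>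
type_synonym strategyI = "nat list \<Rightarrow> real list \<Rightarrow> nat"

definition consistent_I :: "strategyI \<Rightarrow> (nat \<Rightarrow> nat) \<Rightarrow> (nat \<Rightarrow> real) \<Rightarrow> bool" where
  "consistent_I \<sigma> x v \<longleftrightarrow> (\<forall>t. x t = \<sigma> (map x [0..<t]) (map v [0..<t]))"

definition II_wins_run :: "((nat \<Rightarrow> nat) \<Rightarrow> real) \<Rightarrow> (nat \<Rightarrow> nat) \<Rightarrow> (nat \<Rightarrow> real) \<Rightarrow> bool" where
  "II_wins_run f x v \<longleftrightarrow> ereal (f x) = limsup (\<lambda>t. ereal (v t))"

definition winning_strategy_I :: "((nat \<Rightarrow> nat) \<Rightarrow> real) \<Rightarrow> strategyI \<Rightarrow> bool" where
  "winning_strategy_I f \<sigma> \<longleftrightarrow> (\<forall>x v. consistent_I \<sigma> x v \<longrightarrow> \<not> II_wins_run f x v)"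

end

theory Submission
  imports Defs "HOL-Analysis.Analysis" "HOL-Library.Liminf_Limsup"
begin

lemma choice_inj:
  fixes S :: "nat set \<Rightarrow> 'a set"
  assumes big: "\<And>i. (card_of (UNIV::nat set set), card_of (S i)) \<in> ordLeq"
  shows "\<exists>p. inj p \<and> (\<forall>i. p i \<in> S i)"
proof -
  define r where "r = card_of (UNIV::nat set set)"
  have CO: "Card_order r" unfolding r_def by (rule card_of_Card_order)
  have F: "Field r = UNIV" unfolding r_def by (simp add: Field_card_of)
  have WO: "Well_order r" unfolding r_def by (rule card_of_Well_order)
  then have wf: "wf (r - Id)" and lin: "Linear_order r"
    unfolding well_order_on_def by auto
  define H where "H = (\<lambda>(q::nat set \<Rightarrow> 'a) i. SOME y. y \<in> S i \<and> y \<notin> q ` underS r i)"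
  define p where "p = wfrec (r - Id) H"
  have ex: "\<exists>y. y \<in> S i \<and> y \<notin> q ` underS r i" for q i
  proof (rule ccontr)
    assume "\<not> ?thesis"
    then have sub: "S i \<subseteq> q ` underS r i" by blast
    have "(card_of (q ` underS r i), card_of (underS r i)) \<in> ordLeq" by (rule card_of_image)
    moreover have "(card_of (underS r i), r) \<in> ordLess"
      using card_of_underS[OF CO] F by auto
    ultimately have "(card_of (q ` underS r i), r) \<in> ordLess" using ordLeq_ordLess_trans by blast
    moreover have "(card_of (S i), card_of (q ` underS r i)) \<in> ordLeq" using sub card_of_mono1 by blast
    ultimately have "(card_of (S i), r) \<in> ordLess" using ordLeq_ordLess_trans by blast
    then show False using big[of i] not_ordLess_ordLeq unfolding r_def by blast
  qed
  have pi: "p i \<in> S i \<and> p i \<notin> p ` underS r i" for i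
  proof -
    have "p i = H (cut p (r - Id) i) i" unfolding p_def by (rule wfrec[OF wf])
    also have "\<dots> = (SOME y. y \<in> S i \<and> y \<notin> (cut p (r - Id) i) ` underS r i)" unfolding H_def by simp
    finally have e: "p i = (SOME y. y \<in> S i \<and> y \<notin> (cut p (r - Id) i) ` underS r i)" .
    have "(cut p (r - Id) i) ` underS r i = p ` underS r i"
      unfolding cut_def underS_def by (auto intro!: image_cong)
    with e ex[of i "cut p (r - Id) i"] show ?thesis by (metis (mono_tags, lifting) someI_ex)
  qed
  have "inj p"
  proof (rule injI)
    fix i j assume eq: "p i = p j"
    show "i = j"
    proof (rule ccontr)
      assume ne: "i \<noteq> j"
      have "(i, j) \<in> r \<or> (j, i) \<in> r" using lin ne F unfolding linear_order_on_def total_on_def by auto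
      then have "i \<in> underS r j \<or> j \<in> underS r i" using ne unfolding underS_def by auto
      then show False using pi[of i] pi[of j] eq by (metis image_eqI)
    qed
  qed
  then show ?thesis using pi by blast
qed

definition tern :: "nat set \<Rightarrow> real" where
  "tern A = (\<Sum>n. (if n \<in> A then 2 else 0) / 3 ^ Suc n)"

lemma tern_summable: "summable (\<lambda>n. (if n \<in> A then 2 else 0) / (3::real) ^ Suc n)"
proof (rule summable_comparison_test[where g = "\<lambda>n. 2 * (1/3) ^ Suc n"])
  show "\<exists>N. \<forall>n\<ge>N. norm ((if n \<in> A then 2 else 0) / (3::real) ^ Suc n) \<le> 2 * (1 / 3) ^ Suc n"
    by (auto simp: power_divide)
  show "summable (\<lambda>n. 2 * (1 / 3::real) ^ Suc n)"
    by (intro summable_mult summable_Suc_iff[THEN iffD2] summable_geometric) auto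
qed

lemma geo_sum: "(\<Sum>n. 2 / (3::real) ^ Suc n) = 1"
proof -
  have "(\<lambda>n. (2/3) * (1/3::real) ^ n) sums ((2/3) * (1 / (1 - 1/3)))"
    by (intro sums_mult geometric_sums) auto
  then have "(\<lambda>n. 2 / (3::real) ^ Suc n) sums 1"
    by (simp add: power_divide field_simps)
  then show ?thesis by (simp add: sums_iff)
qed

lemma tern_bounds: "0 \<le> tern A \<and> tern A \<le> 1"
proof
  show "0 \<le> tern A" unfolding tern_def by (intro suminf_nonneg tern_summable) auto
  have s2: "summable (\<lambda>n. 2 / (3::real) ^ Suc n)"
    using tern_summable[of UNIV] by simp
  have "tern A \<le> (\<Sum>n. 2 / (3::real) ^ Suc n)"
    unfolding tern_def by (intro suminf_le tern_summable s2) auto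
  then show "tern A \<le> 1" using geo_sum by simp
qed

lemma tern_rec: "tern A = (if 0 \<in> A then 2/3 else 0) + tern {n. Suc n \<in> A} / 3"
proof -
  let ?f = "\<lambda>n. (if n \<in> A then 2 else 0) / (3::real) ^ Suc n"
  have "tern A = (\<Sum>n. ?f (Suc n)) + ?f 0"
    using suminf_split_head[OF tern_summable[of A]] unfolding tern_def by simp
  also have "(\<Sum>n. ?f (Suc n)) = (\<Sum>n. (if Suc n \<in> A then 2 else 0) / 3 ^ Suc n) / 3"
    by (subst suminf_divide[symmetric]) (use tern_summable[of "{n. Suc n \<in> A}"] in \<open>auto simp: field_simps\<close>)
  finally show ?thesis unfolding tern_def by auto
qed

lemma tern_stage: "tern A \<in> cantor_stage m"
proof (induction m arbitrary: A)
  case 0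
  have "0 \<le> tern A" "tern A \<le> 1" using tern_bounds by blast+
  then show ?case by simp
next
  case (Suc m)
  have IH: "tern {n. Suc n \<in> A} \<in> cantor_stage m" by (rule Suc.IH)
  show ?case
  proof (cases "0 \<in> A")
    case True
    then have "tern A = (\<lambda>x. 2/3 + x / 3) (tern {n. Suc n \<in> A})" using tern_rec[of A] by simp
    then have "tern A \<in> (\<lambda>x. 2/3 + x / 3) ` cantor_stage m" using IH by blast
    then show ?thesis by simp
  next
    case False
    then have "tern A = (\<lambda>x. x / 3) (tern {n. Suc n \<in> A})" using tern_rec[of A] by simp
    then have "tern A \<in> (\<lambda>x. x / 3) ` cantor_stage m" using IH by blast
    then show ?thesis by simp
  qed
qed

lemma tern_in: "tern A \<in> middle_thirds_cantor"
  unfolding middle_thirds_cantor_def using tern_stage by blast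

lemma tern_head: "tern A = tern B \<Longrightarrow> (0 \<in> A \<longleftrightarrow> 0 \<in> B) \<and> tern {n. Suc n \<in> A} = tern {n. Suc n \<in> B}"
proof -
  assume eq: "tern A = tern B"
  define a where "a = tern {n. Suc n \<in> A}"
  define b where "b = tern {n. Suc n \<in> B}"
  have ra: "tern A = (if 0 \<in> A then 2/3 else 0) + a / 3" unfolding a_def by (rule tern_rec)
  have rb: "tern B = (if 0 \<in> B then 2/3 else 0) + b / 3" unfolding b_def by (rule tern_rec)
  have ba: "0 \<le> a" "a \<le> 1" unfolding a_def using tern_bounds by blast+
  have bb: "0 \<le> b" "b \<le> 1" unfolding b_def using tern_bounds by blast+
  show ?thesis
  proof (cases "0 \<in> A"; cases "0 \<in> B")
    assume "0 \<in> A" "0 \<in> B"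
    then have "tern A = 2/3 + a/3" "tern B = 2/3 + b/3" using ra rb by simp_all
    then have "a = b" using eq by linarith
    then show ?thesis using \<open>0 \<in> A\<close> \<open>0 \<in> B\<close> a_def b_def by simp
  next
    assume "0 \<in> A" "0 \<notin> B"
    then have "tern A = 2/3 + a/3" "tern B = b/3" using ra rb by simp_all
    then have False using eq ba bb by linarith
    then show ?thesis ..
  next
    assume "0 \<notin> A" "0 \<in> B"
    then have "tern A = a/3" "tern B = 2/3 + b/3" using ra rb by simp_all
    then have False using eq ba bb by linarith
    then show ?thesis ..
  next
    assume "0 \<notin> A" "0 \<notin> B"
    then have "tern A = a/3" "tern B = b/3" using ra rb by simp_all
    then have "a = b" using eq by linarith
    then show ?thesis using \<open>0 \<notin> A\<close> \<open>0 \<notin> B\<close> a_def b_def by simp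
  qed
qed

lemma tern_inj: "inj tern"
proof -
  have "\<forall>A B. tern A = tern B \<longrightarrow> (n \<in> A \<longleftrightarrow> n \<in> B)" for n
  proof (induction n)
    case 0 then show ?case using tern_head by blast
  next
    case (Suc n)
    show ?case
    proof (intro allI impI)
      fix A B :: "nat set" assume "tern A = tern B"
      then have "tern {n. Suc n \<in> A} = tern {n. Suc n \<in> B}" using tern_head by blast
      then have "n \<in> {n. Suc n \<in> A} \<longleftrightarrow> n \<in> {n. Suc n \<in> B}" using Suc.IH by blast
      then show "Suc n \<in> A \<longleftrightarrow> Suc n \<in> B" by simp
    qed
  qed
  then show ?thesis unfolding inj_def by blast
qed

lemma stage_compact: "compact (cantor_stage m)"
proof (induction m)
  case 0 then show ?case by simp
next
  case (Suc m)
  have c1: "continuous_on (cantor_stage m) (\<lambda>x::real. x / 3)" by (intro continuous_intros) auto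
  have c2: "continuous_on (cantor_stage m) (\<lambda>x::real. 2/3 + x / 3)" by (intro continuous_intros) auto
  show ?case using compact_continuous_image[OF c1 Suc.IH] compact_continuous_image[OF c2 Suc.IH]
    by (simp add: compact_Un)
qed

lemma mtc_compact: "compact middle_thirds_cantor"
proof -
  have cl: "closed middle_thirds_cantor" unfolding middle_thirds_cantor_def
    by (intro closed_INT ballI compact_imp_closed stage_compact)
  have sub: "middle_thirds_cantor \<subseteq> cantor_stage 0" unfolding middle_thirds_cantor_def by blast
  have "compact (cantor_stage 0 \<inter> middle_thirds_cantor)"
    by (rule compact_Int_closed[OF stage_compact cl])
  moreover have "cantor_stage 0 \<inter> middle_thirds_cantor = middle_thirds_cantor" using sub by blast
  ultimately show ?thesis by simp
qed

lemma H_nat: "Hausdorff_space (euclidean :: nat topology)"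
  unfolding Hausdorff_space_def
proof (intro allI impI)
  fix x y :: nat assume "x \<in> topspace euclidean \<and> y \<in> topspace euclidean \<and> x \<noteq> y"
  then show "\<exists>U V. openin euclidean U \<and> openin euclidean V \<and> x \<in> U \<and> y \<in> V \<and> disjnt U V"
    by (intro exI[of _ "{x}"] exI[of _ "{y}"]) (auto simp: open_discrete disjnt_def simp flip: open_openin)
qed

lemma H_X: "Hausdorff_space (euclidean :: (nat \<Rightarrow> nat) topology)"
proof -
  have "Hausdorff_space (product_topology (\<lambda>i::nat. euclidean :: nat topology) UNIV)"
    unfolding Hausdorff_space_product_topology using H_nat by blast
  then show ?thesis by (simp add: euclidean_product_topology)
qed

lemma cantor_closed: "is_cantor_set C \<Longrightarrow> closed C"
proof -
  assume "is_cantor_set C"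
  then have h: "C homeomorphic middle_thirds_cantor" unfolding is_cantor_set_def .
  have "compact C" using homeomorphic_compactness[OF h] mtc_compact by simp
  then have "compactin euclidean C" by simp
  then have "closedin euclidean C" by (rule compactin_imp_closedin[OF H_X])
  then show ?thesis by (simp only: closed_closedin)
qed

lemma closed_prefix:
  fixes C :: "(nat \<Rightarrow> nat) set"
  assumes cl: "closed C" and pre: "\<And>n. \<exists>y\<in>C. \<forall>i<n. y i = x i"
  shows "x \<in> C"
proof (rule ccontr)
  assume "x \<notin> C"
  then have xin: "x \<in> - C" by simp
  have op: "openin (product_topology (\<lambda>i. euclidean) UNIV) (- C)"
    using cl unfolding closed_def open_fun_def by simp
  obtain X where X: "x \<in> (\<Pi>\<^sub>E i\<in>UNIV. X i)"
    "finite {i. X i \<noteq> topspace (euclidean::nat topology)}" "(\<Pi>\<^sub>E i\<in>UNIV. X i) \<subseteq> - C"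
    using product_topology_open_contains_basis[OF op xin] by auto
  have fin: "finite {i. X i \<noteq> UNIV}" using X(2) by simp
  then obtain n where n: "\<And>i. X i \<noteq> UNIV \<Longrightarrow> i < n"
    by (metis (mono_tags, lifting) finite_nat_set_iff_bounded mem_Collect_eq)
  obtain y where y: "y \<in> C" "\<forall>i<n. y i = x i" using pre by blast
  have "y \<in> (\<Pi>\<^sub>E i\<in>UNIV. X i)"
  proof -
    have "y i \<in> X i" for i
    proof (cases "i < n")
      case True then show ?thesis using y X(1) by auto
    next
      case False then show ?thesis using n by blast
    qed
    then show ?thesis by auto
  qed
  then show False using X(3) y(1) by blast
qed

definition code :: "(nat \<Rightarrow> nat) set \<Rightarrow> nat set" where
  "code C = {to_nat (map y [0..<n]) | y n. y \<in> C}"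

lemma code_inj:
  assumes "closed C" "closed D" "code C = code D"
  shows "C = D"
proof -
  have sub: "C \<subseteq> D" if "closed D" "code C = code D" for C D
  proof
    fix x assume x: "x \<in> C"
    have "\<exists>y\<in>D. \<forall>i<n. y i = x i" for n
    proof -
      have "to_nat (map x [0..<n]) \<in> code D" using that x unfolding code_def by blast
      then obtain y m where y: "y \<in> D" "to_nat (map y [0..<m]) = to_nat (map x [0..<n])"
        unfolding code_def by auto
      then have me: "map y [0..<m] = map x [0..<n]" by simp
      then have "m = n" by (metis length_map length_upt diff_zero)
      have "\<forall>i<n. y i = x i"
      proof (intro allI impI)
        fix i assume "i < n"
        have "map y [0..<m] ! i = map x [0..<n] ! i" using me by simp
        then show "y i = x i" using \<open>i < n\<close> \<open>m = n\<close> by simp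
      qed
      then show ?thesis using y by blast
    qed
    then show "x \<in> D" using closed_prefix[OF that(1)] by blast
  qed
  show ?thesis using sub[of D C] sub[of C D] assms by auto
qed

definition enc :: "nat set \<Rightarrow> nat set \<Rightarrow> nat \<Rightarrow> nat set" where
  "enc A B k = (\<lambda>n. 3*n) ` A \<union> (\<lambda>n. 3*n+1) ` B \<union> {3*k+2}"

lemma h1: "Suc (3*b) \<noteq> 3*(a::nat)" "3*(a::nat) \<noteq> Suc (3*b)" by presburger+
lemma h2: "Suc (Suc (3*b)) \<noteq> 3*(a::nat)" "3*(a::nat) \<noteq> Suc (Suc (3*b))" by presburger+
lemma h3: "Suc (Suc (3*b)) \<noteq> Suc (3*(a::nat))" "Suc (3*(a::nat)) \<noteq> Suc (Suc (3*b))" by presburger+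

lemma enc0: "3*n \<in> enc A B k \<longleftrightarrow> n \<in> A"
  unfolding enc_def by (auto simp: image_iff h1 h2 h3)
lemma enc1: "3*n+1 \<in> enc A B k \<longleftrightarrow> n \<in> B"
  unfolding enc_def by (auto simp: image_iff h1 h2 h3)
lemma enc2: "3*n+2 \<in> enc A B k \<longleftrightarrow> n = k"
  unfolding enc_def by (auto simp: image_iff h1 h2 h3)

lemma enc_inj: "enc A B k = enc A' B' k' \<Longrightarrow> A = A' \<and> B = B' \<and> k = k'"
proof -
  assume e: "enc A B k = enc A' B' k'"
  have "A = A'" using enc0[of _ A B k] enc0[of _ A' B' k'] e by blast
  moreover have "B = B'" using enc1[of _ A B k] enc1[of _ A' B' k'] e by blast
  moreover have "k = k'" using enc2[of k A B k] enc2[of k A' B' k'] e by simp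
  ultimately show ?thesis by blast
qed

definition dA :: "nat set \<Rightarrow> nat set" where "dA i = {n. 3*n \<in> i}"
definition dk :: "nat set \<Rightarrow> nat" where "dk i = (LEAST k. 3*k+2 \<in> i)"

lemma dA_enc: "dA (enc A B k) = A" unfolding dA_def using enc0 by blast
lemma dk_enc: "dk (enc A B k) = k" unfolding dk_def enc2 by (rule Least_equality) auto

definition S :: "nat set \<Rightarrow> (nat \<Rightarrow> nat) set" where
  "S i = (if \<exists>C. is_cantor_set C \<and> code C = dA i then (SOME C. is_cantor_set C \<and> code C = dA i) else UNIV)"

lemma S_enc: "is_cantor_set C \<Longrightarrow> S (enc (code C) B k) = C"
proof -
  assume c: "is_cantor_set C"
  define i where "i = enc (code C) B k"
  have di: "dA i = code C" unfolding i_def by (rule dA_enc)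
  have ex: "\<exists>C'. is_cantor_set C' \<and> code C' = dA i" using c di by blast
  have Se: "S i = (SOME C'. is_cantor_set C' \<and> code C' = dA i)" unfolding S_def by (rule if_P[OF ex])
  have sp: "is_cantor_set (S i) \<and> code (S i) = dA i" unfolding Se by (rule someI_ex[OF ex])
  then have a1: "is_cantor_set (S i)" and a2: "code (S i) = code C" using di by auto
  have "S i = C" by (rule code_inj[OF cantor_closed[OF a1] cantor_closed[OF c] a2])
  then show ?thesis unfolding i_def .
qed

lemma uncountable_natsets: "uncountable (UNIV :: nat set set)"
proof
  assume cnt: "countable (UNIV :: nat set set)"
  define f :: "nat \<Rightarrow> nat set" where "f = from_nat_into UNIV"
  have f: "range f = UNIV" unfolding f_def by (rule range_from_nat_into[OF _ cnt]) simp
  have "{n. n \<notin> f n} \<in> range f" using f by simp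
  then obtain m where m: "{n. n \<notin> f n} = f m" by (rule rangeE)
  have "m \<in> f m \<longleftrightarrow> m \<notin> f m" by (subst (2) m[symmetric]) simp
  then show False by simp
qed

lemma S_big: "(card_of (UNIV::nat set set), card_of (S i)) \<in> ordLeq"
proof -
  have "\<exists>h. inj_on h (UNIV::nat set set) \<and> h ` UNIV \<subseteq> S i"
  proof (cases "\<exists>C. is_cantor_set C \<and> code C = dA i")
    case True
    define C where "C = (SOME C. is_cantor_set C \<and> code C = dA i)"
    have SC: "S i = C" unfolding S_def C_def using True by (rule if_P)
    have "is_cantor_set C" unfolding C_def using someI_ex[OF True] by blast
    then obtain f g where hm: "homeomorphism C middle_thirds_cantor f g"
      unfolding is_cantor_set_def homeomorphic_def by blast
    then have gC: "g ` middle_thirds_cantor = C" and fg: "\<And>y. y \<in> middle_thirds_cantor \<Longrightarrow> f (g y) = y"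
      unfolding homeomorphism_def by auto
    have "inj_on (g \<circ> tern) UNIV"
    proof (rule inj_onI)
      fix A B assume "(g \<circ> tern) A = (g \<circ> tern) B"
      then have "f (g (tern A)) = f (g (tern B))" by simp
      then have "tern A = tern B" using fg tern_in by simp
      then show "A = B" using tern_inj by (simp add: inj_eq)
    qed
    moreover have "(g \<circ> tern) ` UNIV \<subseteq> S i" using gC tern_in SC by auto
    ultimately show ?thesis by blast
  next
    case False
    then have SU: "S i = UNIV" unfolding S_def by (rule if_not_P)
    have "inj_on (\<lambda>A n. if n \<in> A then 1 else 0 :: nat) UNIV"
    proof (rule inj_onI)
      fix A B assume e: "(\<lambda>n. if n \<in> A then 1 else 0 :: nat) = (\<lambda>n. if n \<in> B then 1 else 0)"
      show "A = B"
      proof (rule set_eqI)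
        fix n show "n \<in> A \<longleftrightarrow> n \<in> B" using fun_cong[OF e, of n] by (auto split: if_splits)
      qed
    qed
    then show ?thesis using SU by blast
  qed
  then show ?thesis using card_of_ordLeq by blast
qed

lemma g_exists: "\<exists>g :: (nat \<Rightarrow> nat) \<Rightarrow> nat. \<forall>C k. is_cantor_set C \<longrightarrow> uncountable (C \<inter> {x. g x \<ge> k})"
proof -
  obtain p where p: "inj p" "\<And>i. p i \<in> S i" using choice_inj[of S, OF S_big] by blast
  define g where "g x = (if x \<in> range p then dk (inv p x) else 0)" for x
  have "uncountable (C \<inter> {x. g x \<ge> k})" if c: "is_cantor_set C" for C k
  proof
    assume cnt: "countable (C \<inter> {x. g x \<ge> k})"
    define \<phi> where "\<phi> B = p (enc (code C) B k)" for B
    have sub: "\<phi> ` UNIV \<subseteq> C \<inter> {x. g x \<ge> k}"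
    proof
      fix y assume "y \<in> \<phi> ` UNIV"
      then obtain B where y: "y = p (enc (code C) B k)" unfolding \<phi>_def by blast
      have "y \<in> C" using p(2)[of "enc (code C) B k"] S_enc[OF c] y by simp
      moreover have "g y = k" unfolding g_def using y by (simp add: inv_f_f[OF p(1)] dk_enc)
      ultimately show "y \<in> C \<inter> {x. g x \<ge> k}" by simp
    qed
    have "inj_on \<phi> UNIV"
    proof (rule inj_onI)
      fix A B assume "\<phi> A = \<phi> B"
      then have "enc (code C) A k = enc (code C) B k" unfolding \<phi>_def using p(1) by (simp add: inj_eq)
      then show "A = B" using enc_inj by blast
    qed
    moreover have "countable (\<phi> ` UNIV)" using countable_subset[OF sub cnt] .
    ultimately have "countable (UNIV :: nat set set)" using countable_image_inj_on by blast
    then show False using uncountable_natsets by blast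
  qed
  then show ?thesis by blast
qed

lemma game_win:
  fixes s :: "nat \<Rightarrow> real" and g :: "(nat \<Rightarrow> nat) \<Rightarrow> nat"
  assumes sm: "strict_mono s"
  defines "m \<equiv> \<lambda>j. (s j + s (Suc j)) / 2"
  defines "cd \<equiv> \<lambda>v::real. if \<exists>j. v < m j then (LEAST j. v < m j) else 0"
  defines "\<sigma> \<equiv> \<lambda>(xs::nat list) (vs::real list). if vs = [] then 0 else cd (last vs)"
  defines "h \<equiv> \<lambda>x. if (\<forall>\<^sub>F t in sequentially. x t \<le> g x) \<and> (\<exists>\<^sub>F t in sequentially. x t = g x) then Suc (g x) else g x"
  shows "winning_strategy_I (\<lambda>x. s (h x)) \<sigma>"
  unfolding winning_strategy_I_def
proof (intro allI impI notI)
  fix x v assume cons: "consistent_I \<sigma> x v" and win: "II_wins_run (\<lambda>x. s (h x)) x v"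
  have xs: "x (Suc t) = cd (v t)" for t
  proof -
    have "x (Suc t) = \<sigma> (map x [0..<Suc t]) (map v [0..<Suc t])" using cons unfolding consistent_I_def by blast
    then show ?thesis unfolding \<sigma>_def by simp
  qed
  define j where "j = h x"
  have L: "ereal (s j) = limsup (\<lambda>t. ereal (v t))" using win unfolding II_wins_run_def j_def by simp
  have smj: "s j < m j" unfolding m_def using sm by (simp add: strict_mono_def)
  have mmono: "m a \<le> m b" if "a \<le> b" for a b
  proof -
    have "s a \<le> s b" "s (Suc a) \<le> s (Suc b)" using sm that by (simp_all add: strict_mono_less_eq)
    then show ?thesis unfolding m_def by simp
  qed
  have ev1: "\<forall>\<^sub>F t in sequentially. v t < m j"
  proof -
    have "limsup (\<lambda>t. ereal (v t)) < ereal (m j)" unfolding L[symmetric] using smj by simp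
    from Limsup_lessD[OF this] show ?thesis by simp
  qed
  have fr1: "\<exists>\<^sub>F t in sequentially. cd (v t) \<ge> j \<and> v t < m j"
  proof (cases j)
    case 0 then show ?thesis using ev1 by (simp add: eventually_frequently)
  next
    case (Suc i)
    have mis: "m i < s j" unfolding m_def Suc using sm by (simp add: strict_mono_def)
    have "\<exists>\<^sub>F t in sequentially. m i < v t"
    proof (rule ccontr)
      assume "\<not> ?thesis"
      then have "\<forall>\<^sub>F t in sequentially. ereal (v t) \<le> ereal (m i)"
        unfolding frequently_def by (simp add: not_less)
      then have "limsup (\<lambda>t. ereal (v t)) \<le> ereal (m i)" by (rule Limsup_bounded)
      then have "ereal (s j) \<le> ereal (m i)" unfolding L .
      then show False using mis by simp
    qed
    then have "\<exists>\<^sub>F t in sequentially. m i < v t \<and> v t < m j"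
      using ev1 by (rule frequently_eventually_frequently)
    then show ?thesis
    proof (rule frequently_elim1)
      fix t assume a: "m i < v t \<and> v t < m j"
      then have ex: "\<exists>j. v t < m j" by blast
      let ?l = "LEAST j. v t < m j"
      have l: "v t < m ?l" using LeastI_ex[OF ex] .
      have "j \<le> ?l"
      proof (rule ccontr)
        assume "\<not> j \<le> ?l"
        then have "?l \<le> i" using Suc by simp
        then have "m ?l \<le> m i" by (rule mmono)
        then show False using a l by simp
      qed
      then show "cd (v t) \<ge> j \<and> v t < m j" unfolding cd_def using ex a by simp
    qed
  qed
  have fr2: "\<exists>\<^sub>F t in sequentially. x (Suc t) = j"
    using fr1
  proof (rule frequently_elim1)
    fix t assume a: "j \<le> cd (v t) \<and> v t < m j"
    then have ex: "\<exists>j'. v t < m j'" by blast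
    have "cd (v t) \<le> j" unfolding cd_def using ex a by (simp add: Least_le)
    then show "x (Suc t) = j" using a xs by simp
  qed
  have ev2: "\<forall>\<^sub>F t in sequentially. x (Suc t) \<le> j"
    using ev1
  proof (rule eventually_mono)
    fix t assume a: "v t < m j"
    then have ex: "\<exists>j'. v t < m j'" by blast
    have "cd (v t) \<le> j" unfolding cd_def using ex a by (simp add: Least_le)
    then show "x (Suc t) \<le> j" using xs by simp
  qed
  have ev3: "\<forall>\<^sub>F t in sequentially. x t \<le> j" using ev2 eventually_sequentially_Suc[of "\<lambda>t. x t \<le> j"] by simp
  have fr3: "\<exists>\<^sub>F t in sequentially. x t = j"
    using fr2 eventually_sequentially_Suc[of "\<lambda>t. x t \<noteq> j"] unfolding frequently_def by simp
  show False
  proof (cases "(\<forall>\<^sub>F t in sequentially. x t \<le> g x) \<and> (\<exists>\<^sub>F t in sequentially. x t = g x)")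
    case True
    then have jj: "j = Suc (g x)" unfolding j_def h_def by simp
    have "\<exists>\<^sub>F t in sequentially. x t = Suc (g x) \<and> x t \<le> g x"
      using fr3 True jj by (simp add: frequently_eventually_frequently)
    then have "\<exists>\<^sub>F t in sequentially. False" by (rule frequently_elim1) linarith
    then show False by simp
  next
    case False
    then have jj: "j = g x" unfolding j_def h_def by simp
    then show False using False ev3 fr3 by simp
  qed
qed

theorem mainTheorem14:
  fixes R :: "real set"
  assumes "\<exists>s :: nat \<Rightarrow> real. strict_mono s \<and> range s \<subseteq> R"
  shows "\<exists>f :: (nat \<Rightarrow> nat) \<Rightarrow> real. (\<forall>x. f x \<in> R) \<and>
           (\<exists>\<sigma>. winning_strategy_I f \<sigma>) \<and>
           (\<forall>(r::real) (C :: (nat \<Rightarrow> nat) set). is_cantor_set C \<longrightarrow>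
              uncountable (C \<inter> {x. f x \<ge> r}) \<or> C \<inter> {x. f x \<ge> r} = {})"
proof -
  define s where "s = (SOME s :: nat \<Rightarrow> real. strict_mono s \<and> range s \<subseteq> R)"
  have s0: "strict_mono s \<and> range s \<subseteq> R" unfolding s_def by (rule someI_ex[OF assms])
  then have sm: "strict_mono s" and rs: "range s \<subseteq> R" by (rule conjunct1, rule conjunct2)
  define g where "g = (SOME g :: (nat \<Rightarrow> nat) \<Rightarrow> nat. \<forall>C k. is_cantor_set C \<longrightarrow> uncountable (C \<inter> {x. g x \<ge> k}))"
  have g0: "\<forall>C k. is_cantor_set C \<longrightarrow> uncountable (C \<inter> {x. g x \<ge> k})" unfolding g_def by (rule someI_ex[OF g_exists])
  have g: "uncountable (C \<inter> {x. g x \<ge> k})" if "is_cantor_set C" for C k using g0 that by simp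
  define h where "h = (\<lambda>x. if (\<forall>\<^sub>F t in sequentially. x t \<le> g x) \<and> (\<exists>\<^sub>F t in sequentially. x t = g x) then Suc (g x) else g x)"
  note gw = game_win[OF sm, of g]
  have w: "\<exists>\<sigma>. winning_strategy_I (\<lambda>x. s (h x)) \<sigma>" unfolding h_def by (rule exI, rule gw)
  have hg: "g x \<le> h x" for x unfolding h_def by simp
  have inR: "\<forall>x. s (h x) \<in> R"
  proof
    fix x have "s (h x) \<in> range s" by (rule rangeI)
    then show "s (h x) \<in> R" using rs by (rule subsetD[rotated])
  qed
  have cant: "uncountable (C \<inter> {x. s (h x) \<ge> r}) \<or> C \<inter> {x. s (h x) \<ge> r} = {}"
    if c: "is_cantor_set C" for r C
  proof (cases "\<exists>k. r \<le> s k")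
    case True
    then obtain k where k: "r \<le> s k" by blast
    have sub: "C \<inter> {x. g x \<ge> k} \<subseteq> C \<inter> {x. s (h x) \<ge> r}"
    proof
      fix x assume x: "x \<in> C \<inter> {x. g x \<ge> k}"
      then have "k \<le> h x" using hg[of x] by simp
      then have "s k \<le> s (h x)" using sm by (simp add: strict_mono_less_eq)
      then show "x \<in> C \<inter> {x. s (h x) \<ge> r}" using x k by simp
    qed
    have "uncountable (C \<inter> {x. s (h x) \<ge> r})"
    proof
      assume "countable (C \<inter> {x. s (h x) \<ge> r})"
      then have "countable (C \<inter> {x. g x \<ge> k})" using countable_subset[OF sub] by blast
      then show False using g[OF c] by blast
    qed
    then show ?thesis by blast
  next
    case False
    have lt: "s (h x) < r" for x using False not_le by blast
    have nl: "\<not> r \<le> s (h x)" for x using lt[of x] by simp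
    have "C \<inter> {x. s (h x) \<ge> r} = {}" using nl by blast
    then show ?thesis by blast
  qed
  show ?thesis
  proof (intro exI[of _ "\<lambda>x. s (h x)"] conjI)
    show "\<forall>x. s (h x) \<in> R" by (rule inR)
    show "\<exists>\<sigma>. winning_strategy_I (\<lambda>x. s (h x)) \<sigma>" by (rule w)
    show "\<forall>r C. is_cantor_set C \<longrightarrow> uncountable (C \<inter> {x. r \<le> s (h x)}) \<or> C \<inter> {x. r \<le> s (h x)} = {}"
      using cant by blast
  qed
qed

end
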